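(* For every integer $r\ge 0$, the graph invariants $P_*^{(r)}$ and $\alpha_*^{(r)}$ are equivalent, i.e. for all graphs $G,H$: $P_*^{(r)}(G)=P_*^{(r)}(H)$ if and only if $\alpha_*^{(r)}(G)=\alpha_*^{(r)}(H)$.
   Context: Graphs are finite, simple and undirected; an $n$-vertex graph $G$ has $V(G)=\{1,\dots,n\}$ and adjacency matrix $A$. Let $\mu_1<\mu_2<\dots<\mu_m$ be the pairwise distinct eigenvalues of $A$, $E_i$ the eigenspace of $\mu_i$, and $P_i$ the matrix of the orthogonal projection of $\mathbb{R}^n$ onto $E_i$. For a vertex pair $(x,y)$ let $P_*(x,y)=(P_1(x,y),\dots,P_m(x,y))$. Let $\mathrm{e}_x$ be the standard basis vector. Let $\alpha_{i,x}=\|P_i\mathrm{e}_x\|$ (the cosine of the angle between $\mathrm{e}_x$ and $E_i$), and let $\alpha_{i,xy}$ be the cosine of the angle between $P_i\mathrm{e}_x$ and $P_i\mathrm{e}_y$, with $\alpha_{i,xy}=0$ if $P_i\mathrm{e}_x=0$ or $P_i\mathrm{e}_y=0$. Define $\alpha_i(x,x)=\alpha_{i,x}$, $\alpha_i(x,y)=\alpha_{i,xy}$ for $x\neq y$, and $\alpha_*(x,y)=(\alpha_1(x,y),\dots,\alpha_m(x,y))$. General framework: for a pair coloring $\chi$ (a map assigning to each graph $G$ and each $(x,y)\in V(G)^2$ a value $\chi(x,y)$, invariant under isomorphisms) define vertex colorings $\chi_0(x)=\chi(x,x)$, $\chi_{r+1}(x)=\big(\chi_r(x),\{\!\{(\chi(x,y),\chi_r(y))\}\!\}_{y\in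 V(G)}\big)$ for integers $r\ge0$, and $\chi_{1/2}(x)=\big(\chi(x,x),\{\!\{\chi(x,y)\}\!\}_{y\in V(G)}\big)$, where $\{\!\{\cdot\}\!\}$ denotes a multiset. The graph invariant $\chi^{(r)}$ is $\chi^{(r)}(G)=\{\!\{\chi_r(x)\}\!\}_{x\in V(G)}$. Two invariants $\mathcal I,\mathcal I'$ are equivalent if each determines the other, i.e. $\mathcal I(G)=\mathcal I(H)\iff \mathcal I'(G)=\mathcal I'(H)$ for all graphs $G,H$. *)

theory Defs
  imports Complex_Main "HOL-Library.Multiset"
begin

definition verts :: "nat \<Rightarrow> nat set" where
  "verts n = {1..n}"

definition graph :: "nat \<Rightarrow> (nat \<Rightarrow> nat \<Rightarrow> bool) \<Rightarrow> bool" where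
  "graph n E \<longleftrightarrow> (\<forall>x y. E x y \<longrightarrow> x \<in> verts n \<and> y \<in> verts n)
                  \<and> (\<forall>x y. E x y \<longrightarrow> E y x) \<and> (\<forall>x. \<not> E x x)"

definition adj :: "nat \<Rightarrow> (nat \<Rightarrow> nat \<Rightarrow> bool) \<Rightarrow> nat \<Rightarrow> nat \<Rightarrow> real" where
  "adj n E x y = (if x \<in> verts n \<and> y \<in> verts n \<and> E x y then 1 else 0)"

definition vecs :: "nat \<Rightarrow> (nat \<Rightarrow> real) set" where
  "vecs n = {v. \<forall>x. x \<notin> verts n \<longrightarrow> v x = 0}"

definition mulv :: "nat \<Rightarrow> (nat \<Rightarrow> nat \<Rightarrow> real) \<Rightarrow> (nat \<Rightarrow> real) \<Rightarrow> nat \<Rightarrow> real" where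
  "mulv n A v = (\<lambda>x. if x \<in> verts n then (\<Sum>y\<in>verts n. A x y * v y) else 0)"

definition inner_n :: "nat \<Rightarrow> (nat \<Rightarrow> real) \<Rightarrow> (nat \<Rightarrow> real) \<Rightarrow> real" where
  "inner_n n u v = (\<Sum>x\<in>verts n. u x * v x)"

definition norm_n :: "nat \<Rightarrow> (nat \<Rightarrow> real) \<Rightarrow> real" where
  "norm_n n v = sqrt (inner_n n v v)"

definition unitv :: "nat \<Rightarrow> nat \<Rightarrow> real" where
  "unitv x = (\<lambda>y. if y = x then 1 else 0)"

definition proj :: "nat \<Rightarrow> (nat \<Rightarrow> real) set \<Rightarrow> (nat \<Rightarrow> real) \<Rightarrow> (nat \<Rightarrow> real)" where
  "proj n S v = (THE w. w \<in> S \<and> (\<forall>u\<in>S. inner_n n (\<lambda>x. v x - w x) u = 0))"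

definition eigenspace :: "nat \<Rightarrow> (nat \<Rightarrow> nat \<Rightarrow> bool) \<Rightarrow> real \<Rightarrow> (nat \<Rightarrow> real) set" where
  "eigenspace n E \<mu> = {v \<in> vecs n. mulv n (adj n E) v = (\<lambda>x. \<mu> * v x)}"

definition eigenvalues :: "nat \<Rightarrow> (nat \<Rightarrow> nat \<Rightarrow> bool) \<Rightarrow> real set" where
  "eigenvalues n E = {\<mu>. \<exists>v\<in>eigenspace n E \<mu>. v \<noteq> (\<lambda>_. 0)}"

definition eigs :: "nat \<Rightarrow> (nat \<Rightarrow> nat \<Rightarrow> bool) \<Rightarrow> real list" where
  "eigs n E = sorted_list_of_set (eigenvalues n E)"

definition Pe :: "nat \<Rightarrow> (nat \<Rightarrow> nat \<Rightarrow> bool) \<Rightarrow> real \<Rightarrow> nat \<Rightarrow> (nat \<Rightarrow> real)" where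
  "Pe n E \<mu> x = proj n (eigenspace n E \<mu>) (unitv x)"

definition Pmat :: "nat \<Rightarrow> (nat \<Rightarrow> nat \<Rightarrow> bool) \<Rightarrow> real \<Rightarrow> nat \<Rightarrow> nat \<Rightarrow> real" where
  "Pmat n E \<mu> x y = Pe n E \<mu> y x"

definition Pstar :: "nat \<Rightarrow> (nat \<Rightarrow> nat \<Rightarrow> bool) \<Rightarrow> nat \<Rightarrow> nat \<Rightarrow> real list" where
  "Pstar n E x y = map (\<lambda>\<mu>. Pmat n E \<mu> x y) (eigs n E)"

definition alpha :: "nat \<Rightarrow> (nat \<Rightarrow> nat \<Rightarrow> bool) \<Rightarrow> real \<Rightarrow> nat \<Rightarrow> nat \<Rightarrow> real" where
  "alpha n E \<mu> x y =
     (if x = y then norm_n n (Pe n E \<mu> x)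
      else (let u = Pe n E \<mu> x; w = Pe n E \<mu> y in
            if u = (\<lambda>_. 0) \<or> w = (\<lambda>_. 0) then 0
            else inner_n n u w / (norm_n n u * norm_n n w)))"

definition alphastar :: "nat \<Rightarrow> (nat \<Rightarrow> nat \<Rightarrow> bool) \<Rightarrow> nat \<Rightarrow> nat \<Rightarrow> real list" where
  "alphastar n E x y = map (\<lambda>\<mu>. alpha n E \<mu> x y) (eigs n E)"

datatype 'c colour = Base 'c | Refine "'c colour" "('c \<times> 'c colour) multiset"

fun wl_col :: "nat set \<Rightarrow> (nat \<Rightarrow> nat \<Rightarrow> 'c) \<Rightarrow> nat \<Rightarrow> nat \<Rightarrow> 'c colour" where
  "wl_col V c 0 x = Base (c x x)"
| "wl_col V c (Suc r) x =
     Refine (wl_col V c r x) (image_mset (\<lambda>y. (c x y, wl_col V c r y)) (mset_set V))"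

definition wl_inv :: "nat set \<Rightarrow> (nat \<Rightarrow> nat \<Rightarrow> 'c) \<Rightarrow> nat \<Rightarrow> 'c colour multiset" where
  "wl_inv V c r = image_mset (wl_col V c r) (mset_set V)"

end

theory Submission
  imports Defs "HOL-Analysis.Analysis"
begin


lemma fin_verts[simp]: "finite (verts n)" by (simp add: verts_def)

lemma inner_comm: "inner_n n u v = inner_n n v u"
  by (simp add: inner_n_def mult.commute)

lemma inner_nonneg: "inner_n n v v \<ge> 0"
  by (simp add: inner_n_def sum_nonneg)

lemma inner_lin: "inner_n n (\<lambda>x. a * u x + b * w x) v = a * inner_n n u v + b * inner_n n w v"
  unfolding inner_n_def by (simp add: distrib_right sum.distrib sum_distrib_left mult.assoc)

lemma inner_lin2: "inner_n n v (\<lambda>x. a * u x + b * w x) = a * inner_n n v u + b * inner_n n v w"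
  using inner_lin[of n a u b w v] by (simp add: inner_comm)

lemma inner_diff: "inner_n n (\<lambda>x. u x - w x) v = inner_n n u v - inner_n n w v"
  unfolding inner_n_def by (simp add: left_diff_distrib sum_subtractf)

lemma inner_scale: "inner_n n (\<lambda>x. a * u x) v = a * inner_n n u v"
  unfolding inner_n_def by (simp add: sum_distrib_left mult.assoc)

lemma inner_zero_vec:
  assumes v: "v \<in> vecs n" and z: "inner_n n v v = 0"
  shows "v = (\<lambda>_. 0)"
proof
  fix x
  have all: "\<forall>y\<in>verts n. v y * v y = 0"
    using z sum_nonneg_eq_0_iff[of "verts n" "\<lambda>y. v y * v y"] by (simp add: inner_n_def)
  show "v x = 0"
  proof (cases "x \<in> verts n")
    case True
    then show ?thesis using all by auto
  next
    case False then show ?thesis using v by (auto simp: vecs_def)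
  qed
qed
lemma inner_eq0_iff: "v \<in> vecs n \<Longrightarrow> inner_n n v v = 0 \<longleftrightarrow> v = (\<lambda>_. 0)"
proof
  assume "v \<in> vecs n" "inner_n n v v = 0" then show "v = (\<lambda>_. 0)" by (rule inner_zero_vec)
next
  assume "v = (\<lambda>_. 0)" then show "inner_n n v v = 0" by (simp add: inner_n_def)
qed

lemma coord_bound: "v \<in> vecs n \<Longrightarrow> (v x)^2 \<le> inner_n n v v"
proof (cases "x \<in> verts n")
  case True
  then have "(v x)^2 = (\<Sum>y\<in>{x}. v y * v y)" by (simp add: power2_eq_square)
  also have "\<dots> \<le> (\<Sum>y\<in>verts n. v y * v y)"
    by (rule sum_mono2) (use True in auto)
  finally show ?thesis by (simp add: inner_n_def)
next
  case False
  assume "v \<in> vecs n" then show ?thesis using False inner_nonneg[of n v] by (auto simp: vecs_def)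
qed

lemma adj_sym: "graph n E \<Longrightarrow> adj n E x y = adj n E y x"
  by (auto simp: adj_def graph_def)

lemma mulv_vecs: "mulv n A v \<in> vecs n"
  by (simp add: mulv_def vecs_def)

lemma inner_mulv_sym:
  assumes "graph n E"
  shows "inner_n n (mulv n (adj n E) u) v = inner_n n u (mulv n (adj n E) v)"
proof -
  have "inner_n n (mulv n (adj n E) u) v = (\<Sum>x\<in>verts n. \<Sum>y\<in>verts n. adj n E x y * u y * v x)"
    unfolding inner_n_def mulv_def
    by (intro sum.cong refl) (auto simp: sum_distrib_right)
  also have "\<dots> = (\<Sum>y\<in>verts n. \<Sum>x\<in>verts n. adj n E x y * u y * v x)"
    by (rule sum.swap)
  also have "\<dots> = inner_n n u (mulv n (adj n E) v)"
    unfolding inner_n_def mulv_def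
    by (intro sum.cong refl) (auto simp: sum_distrib_left adj_sym[OF assms] mult_ac)
  finally show ?thesis .
qed

lemma eig_orth:
  assumes "graph n E" "u \<in> eigenspace n E \<mu>" "w \<in> eigenspace n E \<nu>" "\<mu> \<noteq> \<nu>"
  shows "inner_n n u w = 0"
proof -
  have "\<mu> * inner_n n u w = inner_n n (mulv n (adj n E) u) w"
    using assms(2) by (simp add: eigenspace_def inner_scale)
  also have "\<dots> = inner_n n u (mulv n (adj n E) w)" by (rule inner_mulv_sym[OF assms(1)])
  also have "\<dots> = \<nu> * inner_n n u w"
    using assms(3) by (simp add: eigenspace_def inner_scale inner_comm[of n u])
  finally show ?thesis using assms(4) by auto
qed



lemma coord_cont[continuous_intros]: "continuous_on S (\<lambda>w::nat\<Rightarrow>real. w i)"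
  by (rule continuous_on_subset[OF continuous_on_product_coordinates]) simp

definition box :: "nat \<Rightarrow> real \<Rightarrow> (nat \<Rightarrow> real) set" where
  "box n R = {w. \<forall>x. w x \<in> (if x \<in> verts n then {-R..R} else {0})}"

lemma compact_box: "compact (box n R)"
proof -
  have eq: "box n R = PiE UNIV (\<lambda>x. if x \<in> verts n then {-R..R} else {0})"
    by (auto simp: PiE_def Pi_def box_def)
  have "compactin (product_topology (\<lambda>_. euclidean) UNIV) (PiE UNIV (\<lambda>x::nat. if x \<in> verts n then {-R..R} else ({0}::real set)))"
    by (subst compactin_PiE) auto
  then show ?thesis unfolding eq euclidean_product_topology by simp
qed

lemma in_box:
  assumes "v \<in> vecs n" "\<And>x. x \<in> verts n \<Longrightarrow> \<bar>v x\<bar> \<le> R"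
  shows "v \<in> box n R"
  unfolding box_def
proof (intro CollectI allI)
  fix x show "v x \<in> (if x \<in> verts n then {-R..R} else {0})"
  proof (cases "x \<in> verts n")
    case True then show ?thesis using assms(2)[of x] by (simp add: abs_le_iff)
  next
    case False then show ?thesis using assms(1) by (simp add: vecs_def)
  qed
qed

lemma coord_abs_bound: "v \<in> vecs n \<Longrightarrow> \<bar>v x\<bar> \<le> sqrt (inner_n n v v)"
  using coord_bound[of v n x] by (simp add: real_le_rsqrt)

lemma closed_vecs: "closed (vecs n)"
proof -
  have "closed {v::nat\<Rightarrow>real. \<forall>x. x \<notin> verts n \<longrightarrow> v x = 0}"
  proof (rule closed_Collect_all)
    fix x
    show "closed {v::nat\<Rightarrow>real. x \<notin> verts n \<longrightarrow> v x = 0}"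
    proof (cases "x \<in> verts n")
      case True then show ?thesis by simp
    next
      case False then show ?thesis
        by (simp add: closed_Collect_eq continuous_intros)
    qed
  qed
  then show ?thesis by (simp add: vecs_def)
qed

lemma cont_inner[continuous_intros]:
  assumes "continuous_on S f" "continuous_on S g"
  shows "continuous_on S (\<lambda>w. inner_n n (f w) (g w))"
proof -
  have "\<And>x. continuous_on S (\<lambda>w. f w x)" by (rule continuous_on_product_then_coordinatewise[OF assms(1)])
  moreover have "\<And>x. continuous_on S (\<lambda>w. g w x)" by (rule continuous_on_product_then_coordinatewise[OF assms(2)])
  ultimately show ?thesis unfolding inner_n_def by (intro continuous_intros) auto
qed

lemma inner_quad:
  "inner_n n (\<lambda>x. d x + t * u x) (\<lambda>x. e x + t * w x)
   = inner_n n d e + t * (inner_n n d w + inner_n n u e) + t^2 * inner_n n u w"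
proof -
  have pt: "\<And>x. (d x + t * u x) * (e x + t * w x) = d x * e x + t * (d x * w x) + t * (u x * e x) + t^2 * (u x * w x)"
    by (simp add: algebra_simps power2_eq_square)
  show ?thesis unfolding inner_n_def pt
    by (simp add: sum.distrib sum_distrib_left distrib_left)
qed

lemma quad_zero:
  fixes a b :: real
  assumes "\<And>t. 0 \<le> t * a + t^2 * b"
  shows "a = 0"
proof (rule ccontr)
  assume a: "a \<noteq> 0"
  then have a2: "a^2 > 0" by simp
  show False
  proof (cases "b \<le> 0")
    case True
    have "(-a) * a + (-a)^2 * b = -(a^2) + a^2 * b" by (simp add: power2_eq_square)
    also have "\<dots> < 0" using True a2 by (smt (verit) mult_nonneg_nonpos)
    finally show False using assms[of "-a"] by simp
  next
    case False
    then have b: "b > 0" by simp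
    have "(-a/(2*b)) * a + (-a/(2*b))^2 * b = -(a^2) / (4*b)"
      using b by (simp add: field_simps power2_eq_square)
    also have "\<dots> < 0" using b a2 by simp
    finally show False using assms[of "-a/(2*b)"] by simp
  qed
qed



lemma inner_diff_self_expand:
  "inner_n n (\<lambda>x. v x - (w x + t * u x)) (\<lambda>x. v x - (w x + t * u x))
   = inner_n n (\<lambda>x. v x - w x) (\<lambda>x. v x - w x) + t * (- 2 * inner_n n (\<lambda>x. v x - w x) u) + t^2 * inner_n n u u"
proof -
  have e: "(\<lambda>x. v x - (w x + t * u x)) = (\<lambda>x. (v x - w x) + t * (- u x))" by (simp add: algebra_simps)
  have m: "inner_n n (\<lambda>x. - u x) (\<lambda>x. - u x) = inner_n n u u"
    "inner_n n (\<lambda>x. v x - w x) (\<lambda>x. - u x) = - inner_n n (\<lambda>x. v x - w x) u"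
    "inner_n n (\<lambda>x. - u x) (\<lambda>x. v x - w x) = - inner_n n (\<lambda>x. v x - w x) u"
    by (simp_all add: inner_n_def sum_negf mult.commute)
  show ?thesis unfolding e inner_quad m by simp
qed

lemma proj_exists:
  assumes Sv: "S \<subseteq> vecs n" and Sc: "closed S" and S0: "(\<lambda>_. 0) \<in> S"
    and Sl: "\<And>u w t. u \<in> S \<Longrightarrow> w \<in> S \<Longrightarrow> (\<lambda>x. u x + t * w x) \<in> S"
    and v: "v \<in> vecs n"
  shows "\<exists>w\<in>S. \<forall>u\<in>S. inner_n n (\<lambda>x. v x - w x) u = 0"
proof -
  define g where "g w = inner_n n (\<lambda>x. v x - w x) (\<lambda>x. v x - w x)" for w
  define R where "R = 2 * sqrt (inner_n n v v)"
  define K where "K = box n R \<inter> S"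
  have Kc: "compact K" unfolding K_def using compact_box Sc by blast
  have K0: "(\<lambda>_. 0) \<in> K" unfolding K_def using S0
    by (auto simp: box_def R_def inner_nonneg)
  have gc: "continuous_on K g" unfolding g_def by (intro continuous_intros)
  obtain w0 where w0K: "w0 \<in> K" and w0min: "\<And>w. w \<in> K \<Longrightarrow> g w0 \<le> g w"
    using continuous_attains_inf[OF Kc _ gc] K0 by blast
  have g0: "g (\<lambda>_. 0) = inner_n n v v" by (simp add: g_def)
  have gmin: "g w0 \<le> g w" if wS: "w \<in> S" for w
  proof (cases "g w \<le> inner_n n v v")
    case True
    have wv: "w \<in> vecs n" using wS Sv by auto
    have dv: "(\<lambda>x. v x - w x) \<in> vecs n" using wv v by (auto simp: vecs_def)
    have "w \<in> box n R"
    proof (rule in_box[OF wv])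
      fix x assume "x \<in> verts n"
      have "\<bar>w x\<bar> \<le> \<bar>v x\<bar> + \<bar>v x - w x\<bar>" by linarith
      also have "\<dots> \<le> sqrt (inner_n n v v) + sqrt (g w)"
        using coord_abs_bound[OF v, of x] coord_abs_bound[OF dv, of x] unfolding g_def by simp
      also have "\<dots> \<le> R" unfolding R_def using True by simp
      finally show "\<bar>w x\<bar> \<le> R" .
    qed
    then show ?thesis using w0min wS K_def by blast
  next
    case False
    then show ?thesis using w0min[OF K0] g0 by simp
  qed
  have w0S: "w0 \<in> S" using w0K K_def by auto
  show ?thesis
  proof (intro bexI[OF _ w0S] ballI)
    fix u assume uS: "u \<in> S"
    have "\<And>t. 0 \<le> t * (- 2 * inner_n n (\<lambda>x. v x - w0 x) u) + t^2 * inner_n n u u"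
    proof -
      fix t
      have "g w0 \<le> g (\<lambda>x. w0 x + t * u x)" by (rule gmin[OF Sl[OF w0S uS]])
      then show "0 \<le> t * (- 2 * inner_n n (\<lambda>x. v x - w0 x) u) + t^2 * inner_n n u u"
        unfolding g_def inner_diff_self_expand by simp
    qed
    from quad_zero[OF this] show "inner_n n (\<lambda>x. v x - w0 x) u = 0" by simp
  qed
qed



lemma mulv_lin: "mulv n A (\<lambda>x. a x + t * b x) = (\<lambda>x. mulv n A a x + t * mulv n A b x)"
  by (auto simp: mulv_def distrib_left sum.distrib sum_distrib_left mult.left_commute)

lemma mulv_scale: "mulv n A (\<lambda>x. t * b x) = (\<lambda>x. t * mulv n A b x)"
  by (auto simp: mulv_def sum_distrib_left mult.left_commute)

lemma inner_scale2: "inner_n n u (\<lambda>x. a * v x) = a * inner_n n u v"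
  unfolding inner_n_def by (simp add: sum_distrib_left mult.left_commute)

lemma unit_scale:
  assumes a: "a > 0"
  shows "inner_n n (\<lambda>x. (1 / sqrt a) * z x) (\<lambda>x. (1 / sqrt a) * z x) = inner_n n z z / a"
proof -
  have "(1 / sqrt a) * (1 / sqrt a) = 1 / (sqrt a * sqrt a)" by simp
  also have "sqrt a * sqrt a = a" using a by simp
  finally have e: "(1 / sqrt a) * (1 / sqrt a) = 1 / a" .
  show ?thesis unfolding inner_scale inner_scale2 mult.assoc[symmetric] e by simp
qed

lemma q_alt: "inner_n n (mulv n A v) v = (\<Sum>x\<in>verts n. \<Sum>y\<in>verts n. A x y * v y * v x)"
  unfolding inner_n_def mulv_def by (intro sum.cong refl) (auto simp: sum_distrib_right)

lemma rayleigh: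
  assumes G: "graph n E" and Wv: "W \<subseteq> vecs n" and Wc: "closed W" and W0: "(\<lambda>_. 0) \<in> W"
    and Wl: "\<And>u w t. u \<in> W \<Longrightarrow> w \<in> W \<Longrightarrow> (\<lambda>x. u x + t * w x) \<in> W"
    and Wi: "\<And>u. u \<in> W \<Longrightarrow> mulv n (adj n E) u \<in> W"
    and w: "w \<in> W" "w \<noteq> (\<lambda>_. 0)"
  shows "\<exists>v\<in>W. \<exists>l. v \<noteq> (\<lambda>_. 0) \<and> mulv n (adj n E) v = (\<lambda>x. l * v x)"
proof -
  let ?A = "adj n E"
  define q where "q v = inner_n n (mulv n ?A v) v" for v
  have Ws: "(\<lambda>x. t * u x) \<in> W" if "u \<in> W" for t u using Wl[OF W0 that, of t] by simp
  define K where "K = box n 1 \<inter> (W \<inter> {v. inner_n n v v = 1})"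
  have cl1: "closed {v::nat\<Rightarrow>real. inner_n n v v = 1}"
    by (intro closed_Collect_eq continuous_intros)
  have Kc: "compact K" unfolding K_def
    by (intro compact_Int_closed compact_box closed_Int Wc cl1)
  have wv: "w \<in> vecs n" using w Wv by auto
  have ww: "inner_n n w w > 0" using inner_nonneg[of n w] inner_eq0_iff[OF wv] w(2) by linarith
  define c where "c = 1 / sqrt (inner_n n w w)"
  have cw: "(\<lambda>x. c * w x) \<in> W" using Ws[OF w(1)] .
  have cw1: "inner_n n (\<lambda>x. c * w x) (\<lambda>x. c * w x) = 1"
    using unit_scale[OF ww, of n w] ww unfolding c_def by simp
  have unit_box: "v \<in> box n 1" if "v \<in> W" "inner_n n v v = 1" for v
  proof (rule in_box)
    show vv: "v \<in> vecs n" using that Wv by auto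
    fix x show "\<bar>v x\<bar> \<le> 1" using coord_abs_bound[OF vv, of x] that by simp
  qed
  have Kne: "K \<noteq> {}" unfolding K_def using cw cw1 unit_box by blast
  have qc: "continuous_on K q"
  proof -
    have "\<And>x. continuous_on K (\<lambda>w::nat\<Rightarrow>real. w x)" by (intro continuous_intros)
    then show ?thesis unfolding q_def q_alt by (intro continuous_intros)
  qed
  obtain v0 where v0K: "v0 \<in> K" and v0max: "\<And>v. v \<in> K \<Longrightarrow> q v \<le> q v0"
    using continuous_attains_sup[OF Kc Kne qc] by blast
  have v0W: "v0 \<in> W" and v01: "inner_n n v0 v0 = 1" using v0K K_def by auto
  have v0v: "v0 \<in> vecs n" using v0W Wv by auto
  define lam where "lam = q v0"
  have qscale: "q (\<lambda>x. t * z x) = t^2 * q z" for t z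
    unfolding q_def mulv_scale by (simp add: inner_scale inner_scale2 power2_eq_square)
  have qbound: "q z \<le> lam * inner_n n z z" if zW: "z \<in> W" for z
  proof (cases "z = (\<lambda>_. 0)")
    case True then show ?thesis by (simp add: q_def mulv_def inner_n_def)
  next
    case False
    have zv: "z \<in> vecs n" using zW Wv by auto
    have zz: "inner_n n z z > 0" using inner_nonneg[of n z] inner_eq0_iff[OF zv] False by linarith
    define d where "d = 1 / sqrt (inner_n n z z)"
    have dz1: "inner_n n (\<lambda>x. d * z x) (\<lambda>x. d * z x) = 1"
      using unit_scale[OF zz, of n z] zz unfolding d_def by simp
    have "(\<lambda>x. d * z x) \<in> K" unfolding K_def using Ws[OF zW] dz1 unit_box[OF Ws[OF zW] dz1] by blast
    then have "q (\<lambda>x. d * z x) \<le> lam" using v0max lam_def by blast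
    then have "d^2 * q z \<le> lam" by (simp add: qscale)
    moreover have "d^2 = 1 / inner_n n z z" using zz by (simp add: d_def power_divide)
    ultimately have "q z / inner_n n z z \<le> lam" by simp
    then show ?thesis using zz by (simp add: divide_le_eq mult.commute)
  qed
  have sym: "inner_n n (mulv n ?A a) b = inner_n n (mulv n ?A b) a" for a b
    using inner_mulv_sym[OF G, of a b] by (simp add: inner_comm)
  have key: "inner_n n (mulv n ?A v0) u = lam * inner_n n v0 u" if uW: "u \<in> W" for u
  proof -
    have "\<And>t. 0 \<le> t * (2 * lam * inner_n n v0 u - 2 * inner_n n (mulv n ?A v0) u)
                  + t^2 * (lam * inner_n n u u - q u)"
    proof -
      fix t
      have zW: "(\<lambda>x. v0 x + t * u x) \<in> W" using Wl[OF v0W uW] .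
      have e1: "q (\<lambda>x. v0 x + t * u x) = lam + t * (2 * inner_n n (mulv n ?A v0) u) + t^2 * q u"
        unfolding q_def mulv_lin inner_quad using sym[of u v0] by (simp add: q_def lam_def)
      have e2: "inner_n n (\<lambda>x. v0 x + t * u x) (\<lambda>x. v0 x + t * u x) = 1 + t * (2 * inner_n n v0 u) + t^2 * inner_n n u u"
        unfolding inner_quad using v01 inner_comm[of n u v0] by simp
      have "q (\<lambda>x. v0 x + t * u x) \<le> lam * inner_n n (\<lambda>x. v0 x + t * u x) (\<lambda>x. v0 x + t * u x)"
        by (rule qbound[OF zW])
      then show "0 \<le> t * (2 * lam * inner_n n v0 u - 2 * inner_n n (mulv n ?A v0) u)
                  + t^2 * (lam * inner_n n u u - q u)"
        unfolding e1 e2 by (simp add: algebra_simps)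
    qed
    from quad_zero[OF this] show ?thesis by simp
  qed
  define r where "r = (\<lambda>x. mulv n ?A v0 x + (- lam) * v0 x)"
  have rW: "r \<in> W" unfolding r_def using Wl[OF Wi[OF v0W] v0W] .
  have rv: "r \<in> vecs n" using rW Wv by auto
  have "inner_n n r r = inner_n n (mulv n ?A v0) r - lam * inner_n n v0 r"
    unfolding r_def using inner_lin[of n 1 "mulv n ?A v0" "-lam" v0 "r"] by (simp add: r_def)
  also have "\<dots> = 0" using key[OF rW] by simp
  finally have "r = (\<lambda>_. 0)" using inner_eq0_iff[OF rv] by simp
  then have "mulv n ?A v0 = (\<lambda>x. lam * v0 x)"
    unfolding r_def by (auto simp: fun_eq_iff)
  moreover have "v0 \<noteq> (\<lambda>_. 0)" using v01 by (auto simp: inner_n_def)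
  ultimately show ?thesis using v0W by blast
qed



lemma eig_vecs: "eigenspace n E \<mu> \<subseteq> vecs n" by (auto simp: eigenspace_def)

lemma eig_zero: "(\<lambda>_. 0) \<in> eigenspace n E \<mu>"
  by (auto simp: eigenspace_def vecs_def mulv_def)

lemma eig_lin:
  assumes u: "u \<in> eigenspace n E \<mu>" and w: "w \<in> eigenspace n E \<mu>"
  shows "(\<lambda>x. u x + t * w x) \<in> eigenspace n E \<mu>"
proof -
  have mu: "mulv n (adj n E) u = (\<lambda>x. \<mu> * u x)" and mw: "mulv n (adj n E) w = (\<lambda>x. \<mu> * w x)"
    using u w by (auto simp: eigenspace_def)
  have v: "(\<lambda>x. u x + t * w x) \<in> vecs n" using u w by (auto simp: eigenspace_def vecs_def)
  have e: "(\<lambda>x. \<mu> * u x + t * (\<mu> * w x)) = (\<lambda>x. \<mu> * (u x + t * w x))"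
    by (simp add: fun_eq_iff algebra_simps)
  have m: "mulv n (adj n E) (\<lambda>x. u x + t * w x) = (\<lambda>x. \<mu> * (u x + t * w x))"
    unfolding mulv_lin mu mw by (rule e)
  show ?thesis unfolding eigenspace_def using v m by blast
qed

lemma eig_closed: "closed (eigenspace n E \<mu>)"
proof -
  have "eigenspace n E \<mu> = vecs n \<inter> {v. \<forall>x. mulv n (adj n E) v x = \<mu> * v x}"
    by (auto simp: eigenspace_def fun_eq_iff)
  moreover have "closed {v. \<forall>x. mulv n (adj n E) v x = \<mu> * v x}"
  proof (rule closed_Collect_all)
    fix x
    show "closed {v. mulv n (adj n E) v x = \<mu> * v x}"
    proof (cases "x \<in> verts n")
      case True
      have e: "{v. mulv n (adj n E) v x = \<mu> * v x} = {v. (\<Sum>y\<in>verts n. adj n E x y * v y) = \<mu> * v x}"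
        using True by (simp add: mulv_def)
      have c1: "continuous_on UNIV (\<lambda>v::nat\<Rightarrow>real. \<Sum>y\<in>verts n. adj n E x y * v y)"
        by (rule continuous_on_sum) (rule continuous_on_mult[OF continuous_on_const coord_cont])
      have c2: "continuous_on UNIV (\<lambda>v::nat\<Rightarrow>real. \<mu> * v x)"
        by (rule continuous_on_mult[OF continuous_on_const coord_cont])
      show ?thesis unfolding e by (rule closed_Collect_eq[OF c1 c2])
    next
      case False
      have e: "{v. mulv n (adj n E) v x = \<mu> * v x} = {v. (\<lambda>v::nat\<Rightarrow>real. 0) v = \<mu> * v x}"
        using False by (simp add: mulv_def)
      have c2: "continuous_on UNIV (\<lambda>v::nat\<Rightarrow>real. \<mu> * v x)"
        by (rule continuous_on_mult[OF continuous_on_const coord_cont])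
      show ?thesis unfolding e by (rule closed_Collect_eq[OF continuous_on_const c2])
    qed
  qed
  ultimately show ?thesis using closed_vecs by (simp add: closed_Int)
qed

lemma proj_exists_eig: assumes v: "v \<in> vecs n" shows "\<exists>w\<in>eigenspace n E \<mu>. \<forall>u\<in>eigenspace n E \<mu>. inner_n n (\<lambda>x. v x - w x) u = 0"
  apply (rule proj_exists[of "eigenspace n E \<mu>" n v])
      apply (rule eig_vecs)
     apply (rule eig_closed)
    apply (rule eig_zero)
   apply (erule (1) eig_lin)
  apply (rule v)
  done

lemma proj_char:
  assumes v: "v \<in> vecs n"
  shows "proj n (eigenspace n E \<mu>) v \<in> eigenspace n E \<mu>
    \<and> (\<forall>u\<in>eigenspace n E \<mu>. inner_n n (\<lambda>x. v x - proj n (eigenspace n E \<mu>) v x) u = 0)"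
proof -
  let ?S = "eigenspace n E \<mu>"
  obtain w where w: "w \<in> ?S" "\<forall>u\<in>?S. inner_n n (\<lambda>x. v x - w x) u = 0"
    using proj_exists_eig[OF v] by blast
  have uniq: "w' = w" if w': "w' \<in> ?S" "\<forall>u\<in>?S. inner_n n (\<lambda>x. v x - w' x) u = 0" for w'
  proof -
    define d where "d = (\<lambda>x. w' x - w x)"
    have d1: "d = (\<lambda>x. w' x + (-1) * w x)" unfolding d_def by simp
    have dS: "d \<in> ?S" unfolding d1 by (rule eig_lin[OF w'(1) w(1)])
    have dv: "d \<in> vecs n" using dS eig_vecs by blast
    have d2: "d = (\<lambda>x. (v x - w x) - (v x - w' x))" unfolding d_def by simp
    have "inner_n n d d = inner_n n (\<lambda>x. v x - w x) d - inner_n n (\<lambda>x. v x - w' x) d"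
      by (subst d2) (rule inner_diff)
    also have "\<dots> = 0" using w(2) w'(2) dS by simp
    finally have "d = (\<lambda>_. 0)" using inner_eq0_iff[OF dv] by simp
    then show ?thesis unfolding d_def by (auto simp: fun_eq_iff)
  qed
  have "proj n ?S v = w" unfolding proj_def
  proof (rule the_equality)
    show "w \<in> ?S \<and> (\<forall>u\<in>?S. inner_n n (\<lambda>x. v x - w x) u = 0)" using w by blast
  next
    fix w' assume "w' \<in> ?S \<and> (\<forall>u\<in>?S. inner_n n (\<lambda>x. v x - w' x) u = 0)"
    then show "w' = w" using uniq by blast
  qed
  then show ?thesis using w by simp
qed

lemma unitv_vecs: "x \<in> verts n \<Longrightarrow> unitv x \<in> vecs n"
  by (auto simp: unitv_def vecs_def)

lemma inner_unitv:
  assumes x: "x \<in> verts n" shows "inner_n n (unitv x) w = w x"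
proof -
  have "inner_n n (unitv x) w = (\<Sum>y\<in>verts n. if y = x then w y else 0)"
    unfolding inner_n_def unitv_def by (rule sum.cong) auto
  also have "\<dots> = w x" using x by (simp add: sum.delta')
  finally show ?thesis .
qed

lemma Pe_eig: "x \<in> verts n \<Longrightarrow> Pe n E \<mu> x \<in> eigenspace n E \<mu>"
  unfolding Pe_def using proj_char[OF unitv_vecs] by blast

lemma Pe_orth: "x \<in> verts n \<Longrightarrow> u \<in> eigenspace n E \<mu> \<Longrightarrow> inner_n n (\<lambda>z. unitv x z - Pe n E \<mu> x z) u = 0"
  unfolding Pe_def using proj_char[OF unitv_vecs] by blast

lemma Pe_vecs: "x \<in> verts n \<Longrightarrow> Pe n E \<mu> x \<in> vecs n"
  using Pe_eig eig_vecs by blast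

lemma Pmat_inner:
  assumes "x \<in> verts n" "y \<in> verts n"
  shows "Pmat n E \<mu> x y = inner_n n (Pe n E \<mu> x) (Pe n E \<mu> y)"
proof -
  have "Pmat n E \<mu> x y = inner_n n (unitv x) (Pe n E \<mu> y)"
    unfolding Pmat_def inner_unitv[OF assms(1)] ..
  also have "\<dots> = inner_n n (unitv x) (Pe n E \<mu> y) - inner_n n (\<lambda>z. unitv x z - Pe n E \<mu> x z) (Pe n E \<mu> y)"
  proof -
    have h: "inner_n n (\<lambda>z. unitv x z - Pe n E \<mu> x z) (Pe n E \<mu> y) = 0"
      apply (rule Pe_orth)
       apply (rule assms(1))
      apply (rule Pe_eig)
      apply (rule assms(2))
      done
    show ?thesis unfolding h by simp
  qed
  also have "\<dots> = inner_n n (Pe n E \<mu> x) (Pe n E \<mu> y)"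
  proof -
    have e: "inner_n n (\<lambda>z. unitv x z - Pe n E \<mu> x z) (Pe n E \<mu> y) = inner_n n (unitv x) (Pe n E \<mu> y) - inner_n n (Pe n E \<mu> x) (Pe n E \<mu> y)"
      by (rule inner_diff)
    show ?thesis unfolding e by simp
  qed
  finally show ?thesis .
qed



lemma sum_sq_expand:
  fixes a :: "(nat \<Rightarrow> real) \<Rightarrow> real" and F :: "(nat \<Rightarrow> real) set"
  assumes F: "finite F"
  shows "(\<Sum>y\<in>V. (\<Sum>u\<in>F. a u * u y) * (\<Sum>w\<in>F. a w * w y))
       = (\<Sum>u\<in>F. \<Sum>w\<in>F. a u * a w * (\<Sum>y\<in>V. u y * w y))"
proof -
  have "(\<Sum>y\<in>V. (\<Sum>u\<in>F. a u * u y) * (\<Sum>w\<in>F. a w * w y))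
      = (\<Sum>y\<in>V. \<Sum>u\<in>F. \<Sum>w\<in>F. (a u * u y) * (a w * w y))"
    by (simp only: sum_product)
  also have "\<dots> = (\<Sum>u\<in>F. \<Sum>y\<in>V. \<Sum>w\<in>F. (a u * u y) * (a w * w y))"
    by (rule sum.swap)
  also have "\<dots> = (\<Sum>u\<in>F. \<Sum>w\<in>F. \<Sum>y\<in>V. (a u * u y) * (a w * w y))"
    by (rule sum.cong[OF refl], rule sum.swap)
  also have "\<dots> = (\<Sum>u\<in>F. \<Sum>w\<in>F. a u * a w * (\<Sum>y\<in>V. u y * w y))"
    by (rule sum.cong[OF refl], rule sum.cong[OF refl]) (simp add: sum_distrib_left mult_ac)
  finally show ?thesis .
qed

lemma ortho_card:
  assumes F: "finite F" and Fv: "F \<subseteq> vecs n" and F1: "\<And>u. u \<in> F \<Longrightarrow> inner_n n u u = 1"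
    and F0: "\<And>u w. u \<in> F \<Longrightarrow> w \<in> F \<Longrightarrow> u \<noteq> w \<Longrightarrow> inner_n n u w = 0"
  shows "card F \<le> n"
proof -
  have ip: "inner_n n u w = (if u = w then 1 else 0)" if "u \<in> F" "w \<in> F" for u w
    using F1 F0 that by auto
  have bessel: "(\<Sum>u\<in>F. u x * u x) \<le> 1" if x: "x \<in> verts n" for x
  proof -
    define a where "a u = u x" for u :: "nat \<Rightarrow> real"
    define g where "g y = (\<Sum>u\<in>F. a u * u y)" for y
    have gg: "(\<Sum>y\<in>verts n. g y * g y) = (\<Sum>u\<in>F. a u * a u)"
    proof -
      have "(\<Sum>y\<in>verts n. g y * g y) = (\<Sum>u\<in>F. \<Sum>w\<in>F. a u * a w * inner_n n u w)"
        unfolding g_def inner_n_def by (rule sum_sq_expand[OF F])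
      also have "\<dots> = (\<Sum>u\<in>F. \<Sum>w\<in>F. if w = u then a u * a w else 0)"
        by (rule sum.cong[OF refl], rule sum.cong[OF refl]) (simp add: ip)
      also have "\<dots> = (\<Sum>u\<in>F. a u * a u)"
        by (rule sum.cong[OF refl]) (simp add: sum.delta[OF F])
      finally show ?thesis .
    qed
    have eg: "(\<Sum>y\<in>verts n. unitv x y * g y) = (\<Sum>u\<in>F. a u * a u)"
      using inner_unitv[OF x, of g] unfolding inner_n_def g_def a_def by simp
    have ee: "(\<Sum>y\<in>verts n. unitv x y * unitv x y) = 1"
      using inner_unitv[OF x, of "unitv x"] unfolding inner_n_def by (simp add: unitv_def)
    have "0 \<le> (\<Sum>y\<in>verts n. (unitv x y - g y) * (unitv x y - g y))"
      by (rule sum_nonneg) simp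
    also have "\<dots> = (\<Sum>y\<in>verts n. unitv x y * unitv x y) - 2 * (\<Sum>y\<in>verts n. unitv x y * g y) + (\<Sum>y\<in>verts n. g y * g y)"
    proof -
      have "\<And>y. (unitv x y - g y) * (unitv x y - g y) = unitv x y * unitv x y - 2 * (unitv x y * g y) + g y * g y"
        by (simp add: algebra_simps)
      then show ?thesis by (simp only: sum.distrib sum_subtractf sum_distrib_left[symmetric])
    qed
    also have "\<dots> = 1 - (\<Sum>u\<in>F. a u * a u)" unfolding ee eg gg by simp
    finally show ?thesis unfolding a_def by simp
  qed
  have "card F = (\<Sum>u\<in>F. inner_n n u u)" using F1 by simp
  also have "\<dots> = (\<Sum>x\<in>verts n. \<Sum>u\<in>F. u x * u x)"
    unfolding inner_n_def by (rule sum.swap)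
  also have "\<dots> \<le> (\<Sum>x\<in>verts n. 1)"
    by (rule sum_mono) (rule bessel)
  also have "\<dots> = n" by (simp add: verts_def)
  finally show ?thesis by simp
qed

lemma eig_unit:
  assumes "\<mu> \<in> eigenvalues n E"
  shows "\<exists>v\<in>eigenspace n E \<mu>. inner_n n v v = 1"
proof -
  obtain w where w: "w \<in> eigenspace n E \<mu>" "w \<noteq> (\<lambda>_. 0)"
    using assms by (auto simp: eigenvalues_def)
  have wv: "w \<in> vecs n" using w(1) eig_vecs by blast
  have ww: "inner_n n w w > 0" using inner_nonneg[of n w] inner_eq0_iff[OF wv] w(2) by linarith
  have s: "(\<lambda>x. 0 + (1 / sqrt (inner_n n w w)) * w x) \<in> eigenspace n E \<mu>"
    by (rule eig_lin[OF eig_zero w(1)])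
  have "inner_n n (\<lambda>x. (1 / sqrt (inner_n n w w)) * w x) (\<lambda>x. (1 / sqrt (inner_n n w w)) * w x) = 1"
    using unit_scale[OF ww, of n w] ww by simp
  with s show ?thesis by (intro bexI[of _ "\<lambda>x. (1 / sqrt (inner_n n w w)) * w x"]) auto
qed

lemma fin_eig:
  assumes G: "graph n E"
  shows "finite (eigenvalues n E)"
proof (rule ccontr)
  assume inf: "infinite (eigenvalues n E)"
  obtain M where M: "M \<subseteq> eigenvalues n E" "finite M" "card M = Suc n"
    using infinite_arbitrarily_large[OF inf] by blast
  define f where "f \<mu> = (SOME v. v \<in> eigenspace n E \<mu> \<and> inner_n n v v = 1)" for \<mu>
  have f: "f \<mu> \<in> eigenspace n E \<mu> \<and> inner_n n (f \<mu>) (f \<mu>) = 1" if mM: "\<mu> \<in> M" for \<mu>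
  proof -
    obtain v where "v \<in> eigenspace n E \<mu>" "inner_n n v v = 1" using eig_unit[of \<mu> n E] mM M(1) by blast
    then have "v \<in> eigenspace n E \<mu> \<and> inner_n n v v = 1" by blast
    then show ?thesis unfolding f_def by (rule someI[where P="\<lambda>v. v \<in> eigenspace n E \<mu> \<and> inner_n n v v = 1"])
  qed
  have orth: "inner_n n (f \<mu>) (f \<nu>) = 0" if "\<mu> \<in> M" "\<nu> \<in> M" "\<mu> \<noteq> \<nu>" for \<mu> \<nu>
    using eig_orth[OF G, of "f \<mu>" \<mu> "f \<nu>" \<nu>] f that by blast
  have inj: "inj_on f M"
  proof (rule inj_onI)
    fix \<mu> \<nu> assume "\<mu> \<in> M" "\<nu> \<in> M" "f \<mu> = f \<nu>"
    then show "\<mu> = \<nu>" using orth[of \<mu> \<nu>] f[of \<mu>] by (metis zero_neq_one)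
  qed
  have "card (f ` M) \<le> n"
  proof (rule ortho_card)
    show "finite (f ` M)" using M(2) by simp
    show "f ` M \<subseteq> vecs n" using f eig_vecs by blast
    show "\<And>u. u \<in> f ` M \<Longrightarrow> inner_n n u u = 1" using f by blast
    show "\<And>u w. u \<in> f ` M \<Longrightarrow> w \<in> f ` M \<Longrightarrow> u \<noteq> w \<Longrightarrow> inner_n n u w = 0"
      using orth by blast
  qed
  moreover have "card (f ` M) = Suc n" using card_image[OF inj] M(3) by simp
  ultimately show False by simp
qed

definition Wc :: "nat \<Rightarrow> (nat \<Rightarrow> nat \<Rightarrow> bool) \<Rightarrow> (nat \<Rightarrow> real) set" where
  "Wc n E = {v \<in> vecs n. \<forall>u \<in> (\<Union>\<mu>. eigenspace n E \<mu>). inner_n n v u = 0}"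

lemma cont_inner_const: "continuous_on UNIV (\<lambda>v::nat\<Rightarrow>real. inner_n n v u)"
  unfolding inner_n_def
  by (rule continuous_on_sum) (rule continuous_on_mult[OF coord_cont continuous_on_const])

lemma Wc_closed: "closed (Wc n E)"
proof -
  have "Wc n E = vecs n \<inter> (\<Inter>u \<in> (\<Union>\<mu>. eigenspace n E \<mu>). {v. inner_n n v u = 0})"
    unfolding Wc_def by blast
  moreover have "closed (\<Inter>u \<in> (\<Union>\<mu>. eigenspace n E \<mu>). {v. inner_n n v u = 0})"
    by (rule closed_INT, rule ballI, rule closed_Collect_eq[OF cont_inner_const continuous_on_const])
  ultimately show ?thesis using closed_vecs closed_Int by metis
qed

lemma Wc_zero:
  assumes G: "graph n E" and v: "v \<in> Wc n E"
  shows "v = (\<lambda>_. 0)"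
proof (rule ccontr)
  assume nz: "v \<noteq> (\<lambda>_. 0)"
  have Wv: "Wc n E \<subseteq> vecs n" unfolding Wc_def by blast
  have W0: "(\<lambda>_. 0) \<in> Wc n E" unfolding Wc_def by (auto simp: vecs_def inner_n_def)
  have Wl: "(\<lambda>x. a x + t * b x) \<in> Wc n E" if "a \<in> Wc n E" "b \<in> Wc n E" for a b t
  proof -
    have "(\<lambda>x. a x + t * b x) \<in> vecs n" using that unfolding Wc_def vecs_def by auto
    moreover have "inner_n n (\<lambda>x. a x + t * b x) u = 0" if u: "u \<in> (\<Union>\<mu>. eigenspace n E \<mu>)" for u
    proof -
      have "inner_n n (\<lambda>x. 1 * a x + t * b x) u = 1 * inner_n n a u + t * inner_n n b u"
        by (rule inner_lin)
      moreover have "inner_n n a u = 0" "inner_n n b u = 0"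
        using \<open>a \<in> Wc n E\<close> \<open>b \<in> Wc n E\<close> u unfolding Wc_def by blast+
      ultimately show ?thesis by simp
    qed
    ultimately show ?thesis unfolding Wc_def by blast
  qed
  have Wi: "mulv n (adj n E) a \<in> Wc n E" if a: "a \<in> Wc n E" for a
  proof -
    have "inner_n n (mulv n (adj n E) a) u = 0" if u: "u \<in> (\<Union>\<mu>. eigenspace n E \<mu>)" for u
    proof -
      obtain \<mu> where um: "u \<in> eigenspace n E \<mu>" using u by blast
      have "inner_n n (mulv n (adj n E) a) u = inner_n n a (mulv n (adj n E) u)"
        by (rule inner_mulv_sym[OF G])
      also have "\<dots> = inner_n n a (\<lambda>x. \<mu> * u x)" using um by (simp add: eigenspace_def)
      also have "\<dots> = \<mu> * inner_n n a u" by (rule inner_scale2)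
      also have "inner_n n a u = 0" using a um unfolding Wc_def by blast
      finally show ?thesis by simp
    qed
    then show ?thesis unfolding Wc_def using mulv_vecs by blast
  qed
  obtain w l where w: "w \<in> Wc n E" "w \<noteq> (\<lambda>_. 0)" "mulv n (adj n E) w = (\<lambda>x. l * w x)"
    using rayleigh[OF G Wv Wc_closed W0 Wl Wi v nz] by blast
  have wv: "w \<in> vecs n" using w(1) Wv by blast
  have we: "w \<in> eigenspace n E l" unfolding eigenspace_def using wv w(3) by blast
  have "inner_n n w w = 0" using w(1) we unfolding Wc_def by blast
  then show False using inner_eq0_iff[OF wv] w(2) by simp
qed



lemma inner_sum_left:
  assumes "finite I"
  shows "inner_n n (\<lambda>y. \<Sum>i\<in>I. f i y) u = (\<Sum>i\<in>I. inner_n n (f i) u)"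
  unfolding inner_n_def by (simp only: sum_distrib_right) (rule sum.swap)

lemma sum_Pe:
  assumes G: "graph n E" and x: "x \<in> verts n"
  shows "(\<lambda>y. \<Sum>\<mu>\<in>eigenvalues n E. Pe n E \<mu> x y) = unitv x"
proof -
  let ?L = "eigenvalues n E"
  have fin: "finite ?L" by (rule fin_eig[OF G])
  define z where "z = (\<lambda>y. unitv x y - (\<Sum>\<mu>\<in>?L. Pe n E \<mu> x y))"
  have zv: "z \<in> vecs n"
  proof -
    have "z y = 0" if y: "y \<notin> verts n" for y
    proof -
      have "unitv x y = 0" using x y by (auto simp: unitv_def)
      moreover have "Pe n E \<mu> x y = 0" for \<mu> using Pe_vecs[OF x, of E \<mu>] y by (auto simp: vecs_def)
      ultimately show ?thesis unfolding z_def by simp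
    qed
    then show ?thesis by (auto simp: vecs_def)
  qed
  have zo: "inner_n n z u = 0" if u: "u \<in> eigenspace n E \<nu>" for u \<nu>
  proof (cases "\<nu> \<in> ?L")
    case True
    have s1: "inner_n n z u = inner_n n (unitv x) u - (\<Sum>\<mu>\<in>?L. inner_n n (Pe n E \<mu> x) u)"
      unfolding z_def inner_diff inner_sum_left[OF fin] ..
    have s2: "(\<Sum>\<mu>\<in>?L. inner_n n (Pe n E \<mu> x) u) = inner_n n (Pe n E \<nu> x) u + (\<Sum>\<mu>\<in>?L - {\<nu>}. inner_n n (Pe n E \<mu> x) u)"
      by (rule sum.remove[OF fin True])
    have s3: "(\<Sum>\<mu>\<in>?L - {\<nu>}. inner_n n (Pe n E \<mu> x) u) = 0"
    proof (rule sum.neutral, rule ballI)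
      fix \<mu> assume "\<mu> \<in> ?L - {\<nu>}"
      then have "\<mu> \<noteq> \<nu>" by blast
      then show "inner_n n (Pe n E \<mu> x) u = 0" by (rule eig_orth[OF G Pe_eig[OF x] u])
    qed
    have s4: "inner_n n (\<lambda>z. unitv x z - Pe n E \<nu> x z) u = 0" by (rule Pe_orth[OF x u])
    have s5: "inner_n n (\<lambda>z. unitv x z - Pe n E \<nu> x z) u = inner_n n (unitv x) u - inner_n n (Pe n E \<nu> x) u"
      by (rule inner_diff)
    show ?thesis unfolding s1 s2 s3 using s4 s5 by simp
  next
    case False
    then have "u = (\<lambda>_. 0)" using u unfolding eigenvalues_def by blast
    then show ?thesis by (simp add: inner_n_def)
  qed
  have "z \<in> Wc n E" unfolding Wc_def using zv zo by blast
  then have "z = (\<lambda>_. 0)" by (rule Wc_zero[OF G])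
  then show ?thesis unfolding z_def by (auto simp: fun_eq_iff)
qed

lemma Pmat_sum:
  assumes G: "graph n E" and x: "x \<in> verts n" and y: "y \<in> verts n"
  shows "(\<Sum>\<mu>\<in>eigenvalues n E. Pmat n E \<mu> x y) = (if x = y then 1 else 0)"
proof -
  have "(\<Sum>\<mu>\<in>eigenvalues n E. Pmat n E \<mu> x y) = (\<lambda>z. \<Sum>\<mu>\<in>eigenvalues n E. Pe n E \<mu> y z) x"
    by (simp add: Pmat_def)
  also have "\<dots> = unitv y x" using fun_cong[OF sum_Pe[OF G y], of x] by simp
  finally show ?thesis by (auto simp: unitv_def)
qed



lemma norm_Pe: "x \<in> verts n \<Longrightarrow> norm_n n (Pe n E \<mu> x) = sqrt (Pmat n E \<mu> x x)"
  unfolding norm_n_def using Pmat_inner[of x n x E \<mu>] by simp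

lemma Pe_zero_iff: "x \<in> verts n \<Longrightarrow> Pe n E \<mu> x = (\<lambda>_. 0) \<longleftrightarrow> Pmat n E \<mu> x x = 0"
  using inner_eq0_iff[OF Pe_vecs, of x n E \<mu>] Pmat_inner[of x n x E \<mu>] by simp

lemma Pmat_nonneg: "x \<in> verts n \<Longrightarrow> Pmat n E \<mu> x x \<ge> 0"
  using Pmat_inner[of x n x E \<mu>] inner_nonneg[of n "Pe n E \<mu> x"] by simp

lemma alpha_diag: "x \<in> verts n \<Longrightarrow> alpha n E \<mu> x x = sqrt (Pmat n E \<mu> x x)"
  unfolding alpha_def using norm_Pe[of x n E \<mu>] by simp

lemma Pmat_off_zero:
  assumes x: "x \<in> verts n" and y: "y \<in> verts n" and z: "Pmat n E \<mu> x x = 0 \<or> Pmat n E \<mu> y y = 0"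
  shows "Pmat n E \<mu> x y = 0"
proof -
  have "Pe n E \<mu> x = (\<lambda>_. 0) \<or> Pe n E \<mu> y = (\<lambda>_. 0)" using z Pe_zero_iff[OF x] Pe_zero_iff[OF y] by blast
  then have "inner_n n (Pe n E \<mu> x) (Pe n E \<mu> y) = 0" by (auto simp: inner_n_def)
  then show ?thesis using Pmat_inner[OF x y] by simp
qed

lemma alpha_off:
  assumes x: "x \<in> verts n" and y: "y \<in> verts n" and xy: "x \<noteq> y"
  shows "alpha n E \<mu> x y = (if Pmat n E \<mu> x x = 0 \<or> Pmat n E \<mu> y y = 0 then 0
      else Pmat n E \<mu> x y / (sqrt (Pmat n E \<mu> x x) * sqrt (Pmat n E \<mu> y y)))"
proof -
  have "alpha n E \<mu> x y = (if Pe n E \<mu> x = (\<lambda>_. 0) \<or> Pe n E \<mu> y = (\<lambda>_. 0) then 0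
      else inner_n n (Pe n E \<mu> x) (Pe n E \<mu> y) / (norm_n n (Pe n E \<mu> x) * norm_n n (Pe n E \<mu> y)))"
    unfolding alpha_def Let_def using xy by simp
  also have "\<dots> = (if Pmat n E \<mu> x x = 0 \<or> Pmat n E \<mu> y y = 0 then 0
      else Pmat n E \<mu> x y / (sqrt (Pmat n E \<mu> x x) * sqrt (Pmat n E \<mu> y y)))"
    unfolding Pe_zero_iff[OF x] Pe_zero_iff[OF y] norm_Pe[OF x] norm_Pe[OF y] Pmat_inner[OF x y, symmetric] ..
  finally show ?thesis .
qed

lemma eigs_props:
  assumes G: "graph n E"
  shows "distinct (eigs n E)" "set (eigs n E) = eigenvalues n E"
  unfolding eigs_def using fin_eig[OF G] by auto

lemma sum_list_eigs:
  assumes G: "graph n E"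
  shows "sum_list (map f (eigs n E)) = (\<Sum>\<mu>\<in>eigenvalues n E. f \<mu>)"
  using sum_list_distinct_conv_sum_set[OF eigs_props(1)[OF G], of f] eigs_props(2)[OF G] by simp

lemma detect_P:
  assumes G: "graph n E" and x: "x \<in> verts n" and y: "y \<in> verts n"
    and eq: "Pstar n E x y = Pstar n E x x"
  shows "x = y"
proof (rule ccontr)
  assume xy: "x \<noteq> y"
  have "sum_list (Pstar n E x y) = sum_list (Pstar n E x x)" using eq by simp
  moreover have "sum_list (Pstar n E x y) = 0"
    unfolding Pstar_def sum_list_eigs[OF G] Pmat_sum[OF G x y] using xy by simp
  moreover have "sum_list (Pstar n E x x) = 1"
    unfolding Pstar_def sum_list_eigs[OF G] Pmat_sum[OF G x x] by simp
  ultimately show False by simp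
qed

lemma detect_A:
  assumes G: "graph n E" and x: "x \<in> verts n" and y: "y \<in> verts n"
    and eq1: "alphastar n E x y = alphastar n E x x" and eq2: "alphastar n E x y = alphastar n E y y"
  shows "x = y"
proof (rule ccontr)
  assume xy: "x \<noteq> y"
  let ?L = "eigenvalues n E"
  define s where "s \<mu> = sqrt (Pmat n E \<mu> x x)" for \<mu>
  have pt: "alpha n E \<mu> x y = alpha n E \<mu> x x \<and> alpha n E \<mu> x y = alpha n E \<mu> y y" if m: "\<mu> \<in> ?L" for \<mu>
  proof -
    have m': "\<mu> \<in> set (eigs n E)" using m eigs_props(2)[OF G] by simp
    show ?thesis using eq1 eq2 m' unfolding alphastar_def by (simp add: map_eq_conv)
  qed
  have cube: "Pmat n E \<mu> x y = s \<mu> ^ 3" and sq: "Pmat n E \<mu> x x = s \<mu> ^ 2" and s0: "s \<mu> \<ge> 0"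
    if m: "\<mu> \<in> ?L" for \<mu>
  proof -
    have nx: "Pmat n E \<mu> x x \<ge> 0" by (rule Pmat_nonneg[OF x])
    have ny: "Pmat n E \<mu> y y \<ge> 0" by (rule Pmat_nonneg[OF y])
    show sqx: "Pmat n E \<mu> x x = s \<mu> ^ 2" unfolding s_def using nx by simp
    show "s \<mu> \<ge> 0" unfolding s_def using nx by simp
    have "sqrt (Pmat n E \<mu> y y) = s \<mu>"
      using pt[OF m] unfolding alpha_diag[OF x] alpha_diag[OF y] s_def by metis
    then have sqy: "Pmat n E \<mu> y y = s \<mu> ^ 2" using ny by (metis real_sqrt_pow2)
    have axy: "alpha n E \<mu> x y = s \<mu>" using pt[OF m] unfolding alpha_diag[OF x] s_def by simp
    show "Pmat n E \<mu> x y = s \<mu> ^ 3"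
    proof (cases "s \<mu> = 0")
      case True
      then have "Pmat n E \<mu> x x = 0" using sqx by simp
      then show ?thesis using Pmat_off_zero[OF x y] True by simp
    next
      case False
      have px: "Pmat n E \<mu> x x \<noteq> 0" using sqx False by simp
      have py: "Pmat n E \<mu> y y \<noteq> 0" using sqy False by simp
      have "alpha n E \<mu> x y = Pmat n E \<mu> x y / (s \<mu> * s \<mu>)"
        unfolding alpha_off[OF x y xy] using px py \<open>sqrt (Pmat n E \<mu> y y) = s \<mu>\<close> by (simp add: s_def)
      then have "Pmat n E \<mu> x y / (s \<mu> * s \<mu>) = s \<mu>" using axy by simp
      then show ?thesis using False by (simp add: field_simps power3_eq_cube)
    qed
  qed
  have "(\<Sum>\<mu>\<in>?L. s \<mu> ^ 3) = (\<Sum>\<mu>\<in>?L. Pmat n E \<mu> x y)"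
    by (rule sum.cong[OF refl]) (simp add: cube)
  also have "\<dots> = 0" using Pmat_sum[OF G x y] xy by simp
  finally have z3: "(\<Sum>\<mu>\<in>?L. s \<mu> ^ 3) = 0" .
  have "\<forall>\<mu>\<in>?L. s \<mu> ^ 3 = 0"
    using z3 sum_nonneg_eq_0_iff[OF fin_eig[OF G], of "\<lambda>\<mu>. s \<mu> ^ 3"] s0 by simp
  then have "\<forall>\<mu>\<in>?L. s \<mu> ^ 2 = 0" by simp
  then have "(\<Sum>\<mu>\<in>?L. Pmat n E \<mu> x x) = 0" using sq by simp
  moreover have "(\<Sum>\<mu>\<in>?L. Pmat n E \<mu> x x) = 1" using Pmat_sum[OF G x x] by simp
  ultimately show False by simp
qed



definition gPA :: "real \<Rightarrow> real \<Rightarrow> real \<Rightarrow> real" where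
  "gPA p a b = (if a = 0 \<or> b = 0 then 0 else p / (sqrt a * sqrt b))"

definition fPA :: "real list \<Rightarrow> real list \<Rightarrow> real list \<Rightarrow> real list" where
  "fPA p a b = (if p = a \<and> p = b then map sqrt a else map (\<lambda>i. gPA (p!i) (a!i) (b!i)) [0..<length p])"

definition fAP :: "real list \<Rightarrow> real list \<Rightarrow> real list \<Rightarrow> real list" where
  "fAP p a b = (if p = a \<and> p = b then map (\<lambda>t. t^2) a else map (\<lambda>i. p!i * a!i * b!i) [0..<length p])"

lemma conv_PA:
  assumes G: "graph n E" and x: "x \<in> verts n" and y: "y \<in> verts n"
  shows "fPA (Pstar n E x y) (Pstar n E x x) (Pstar n E y y) = alphastar n E x y"
proof (cases "x = y")
  case True
  then show ?thesis unfolding fPA_def Pstar_def alphastar_def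
    by (simp add: alpha_diag[OF y])
next
  case False
  have nd: "\<not> (Pstar n E x y = Pstar n E x x \<and> Pstar n E x y = Pstar n E y y)"
    using detect_P[OF G x y] False by blast
  show ?thesis unfolding fPA_def using nd
    by (auto intro!: nth_equalityI simp: Pstar_def alphastar_def gPA_def alpha_off[OF x y False])
qed

lemma conv_AP:
  assumes G: "graph n E" and x: "x \<in> verts n" and y: "y \<in> verts n"
  shows "fAP (alphastar n E x y) (alphastar n E x x) (alphastar n E y y) = Pstar n E x y"
proof (cases "x = y")
  case True
  then show ?thesis unfolding fAP_def Pstar_def alphastar_def
    by (simp add: alpha_diag[OF y] Pmat_nonneg[OF y])
next
  case False
  have nd: "\<not> (alphastar n E x y = alphastar n E x x \<and> alphastar n E x y = alphastar n E y y)"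
    using detect_A[OF G x y] False by blast
  have ent: "alpha n E \<mu> x y * alpha n E \<mu> x x * alpha n E \<mu> y y = Pmat n E \<mu> x y" for \<mu>
  proof (cases "Pmat n E \<mu> x x = 0 \<or> Pmat n E \<mu> y y = 0")
    case True
    then show ?thesis using Pmat_off_zero[OF x y True] alpha_off[OF x y False, of E \<mu>] by simp
  next
    case F: False
    have "sqrt (Pmat n E \<mu> x x) * sqrt (Pmat n E \<mu> y y) \<noteq> 0" using F Pmat_nonneg[OF x] Pmat_nonneg[OF y] by simp
    then show ?thesis unfolding alpha_off[OF x y False] alpha_diag[OF x] alpha_diag[OF y] using F by simp
  qed
  show ?thesis unfolding fAP_def using nd
    by (auto intro!: nth_equalityI simp: Pstar_def alphastar_def ent)
qed

primrec base_of :: "'c colour \<Rightarrow> 'c" where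
  "base_of (Base c) = c"
| "base_of (Refine c M) = base_of c"

fun tr :: "nat \<Rightarrow> ('c \<Rightarrow> 'd) \<Rightarrow> ('c \<Rightarrow> 'c \<Rightarrow> 'c \<Rightarrow> 'd) \<Rightarrow> 'c colour \<Rightarrow> 'd colour" where
  "tr 0 h f c = Base (h (base_of c))"
| "tr (Suc r) h f c = (case c of
      Base a \<Rightarrow> Base (h a)
    | Refine c0 M \<Rightarrow> Refine (tr r h f c0) (image_mset (\<lambda>(e, d). (f e (base_of c0) (base_of d), tr r h f d)) M))"

lemma base_wl: "base_of (wl_col V c r x) = c x x"
  by (induction r) auto

lemma tr_wl:
  assumes fin: "finite V"
    and H1: "\<And>x. x \<in> V \<Longrightarrow> h (P x x) = A x x"
    and H2: "\<And>x y. x \<in> V \<Longrightarrow> y \<in> V \<Longrightarrow> f (P x y) (P x x) (P y y) = A x y"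
  shows "x \<in> V \<Longrightarrow> tr r h f (wl_col V P r x) = wl_col V A r x"
proof (induction r arbitrary: x)
  case 0
  then show ?case by (simp add: base_wl H1)
next
  case (Suc r)
  have "image_mset (\<lambda>(e, d). (f e (base_of (wl_col V P r x)) (base_of d), tr r h f d))
          (image_mset (\<lambda>y. (P x y, wl_col V P r y)) (mset_set V))
      = image_mset (\<lambda>y. (f (P x y) (P x x) (P y y), tr r h f (wl_col V P r y))) (mset_set V)"
    by (simp add: image_mset.compositionality comp_def base_wl)
  also have "\<dots> = image_mset (\<lambda>y. (A x y, wl_col V A r y)) (mset_set V)"
  proof (rule image_mset_cong)
    fix y assume "y \<in># mset_set V"
    then have y: "y \<in> V" using fin by simp
    show "(f (P x y) (P x x) (P y y), tr r h f (wl_col V P r y)) = (A x y, wl_col V A r y)"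
      using H2[OF Suc.prems y] Suc.IH[OF y] by simp
  qed
  finally show ?case using Suc.IH[OF Suc.prems] by simp
qed

lemma inv_tr:
  assumes fin: "finite V"
    and H1: "\<And>x. x \<in> V \<Longrightarrow> h (P x x) = A x x"
    and H2: "\<And>x y. x \<in> V \<Longrightarrow> y \<in> V \<Longrightarrow> f (P x y) (P x x) (P y y) = A x y"
  shows "image_mset (tr r h f) (wl_inv V P r) = wl_inv V A r"
  unfolding wl_inv_def image_mset.compositionality
  by (rule image_mset_cong) (use tr_wl[where V=V and h=h and P=P and A=A and f=f, OF fin H1 H2] fin in auto)

lemma inv_PA:
  assumes G: "graph n E"
  shows "image_mset (tr r (map sqrt) fPA) (wl_inv (verts n) (Pstar n E) r) = wl_inv (verts n) (alphastar n E) r"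
proof (rule inv_tr)
  show "finite (verts n)" by simp
  show "map sqrt (Pstar n E x x) = alphastar n E x x" if "x \<in> verts n" for x
    unfolding Pstar_def alphastar_def using alpha_diag[OF that] by simp
  show "fPA (Pstar n E x y) (Pstar n E x x) (Pstar n E y y) = alphastar n E x y"
    if "x \<in> verts n" "y \<in> verts n" for x y by (rule conv_PA[OF G that])
qed

lemma inv_AP:
  assumes G: "graph n E"
  shows "image_mset (tr r (map (\<lambda>t. t^2)) fAP) (wl_inv (verts n) (alphastar n E) r) = wl_inv (verts n) (Pstar n E) r"
proof (rule inv_tr)
  show "finite (verts n)" by simp
  show "map (\<lambda>t. t^2) (alphastar n E x x) = Pstar n E x x" if "x \<in> verts n" for x
    unfolding Pstar_def alphastar_def using alpha_diag[OF that] Pmat_nonneg[OF that] by simp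
  show "fAP (alphastar n E x y) (alphastar n E x x) (alphastar n E y y) = Pstar n E x y"
    if "x \<in> verts n" "y \<in> verts n" for x y by (rule conv_AP[OF G that])
qed

theorem lemma3p1:
  fixes r n m :: nat and E F :: "nat \<Rightarrow> nat \<Rightarrow> bool"
  assumes "graph n E" and "graph m F"
  shows "wl_inv (verts n) (Pstar n E) r = wl_inv (verts m) (Pstar m F) r
     \<longleftrightarrow> wl_inv (verts n) (alphastar n E) r = wl_inv (verts m) (alphastar m F) r"
proof
  assume "wl_inv (verts n) (Pstar n E) r = wl_inv (verts m) (Pstar m F) r"
  then show "wl_inv (verts n) (alphastar n E) r = wl_inv (verts m) (alphastar m F) r"
    using inv_PA[OF assms(1), of r] inv_PA[OF assms(2), of r] by metis
next
  assume "wl_inv (verts n) (alphastar n E) r = wl_inv (verts m) (alphastar m F) r"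
  then show "wl_inv (verts n) (Pstar n E) r = wl_inv (verts m) (Pstar m F) r"
    using inv_AP[OF assms(1), of r] inv_AP[OF assms(2), of r] by metis
qed

end
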